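(* Let $\ell$ be a positive integer and $n$ an integer such that $a:=n/\ell\in\mathbb Z$ and $n\ell+\ell^2>0$. Let $\xi_\ell=e^{2\pi i/\ell}$ and $I=\mathbb Z\cap[n,n+\ell-1]$. For parameters $(N,L)$ with $L\in\mathbb Z_{>0}$, $N\in\mathbb Z$, $A:=N/L\in\mathbb Z$, $NL+L^2>0$ (this will be used for $(N,L)=(n,\ell)$ and $(N,L)=(a,1)$), define for $n'\in\mathbb R$, $\ell'\in\mathbb Z$ $$\chi_{\mathsf A^{N,L}_{n',\ell'}}(u,v;\tau)=-i\,\frac{\theta_1(u;\tau)}{\eta(\tau)^3}\sum_{m\in\mathbb Z}\frac{(-1)^{k}e^{2\pi i v k}\,e^{2\pi i u(Ak+n'+\frac12)}\,e^{\pi i\tau k(k(2A+1)+2n'+1)}}{1-e^{2\pi i(u+k\tau)}},\qquad k=mL+\ell',$$ and for $n',e'\in\mathbb C$ $$\chi_{\mathsf T^{N,L}_{n',e'}}(u,v;\tau)=i(-1)^{\lfloor e'\rfloor}\frac{\theta_1(u;\tau)}{\eta(\tau)^3}\sum_{m\in\mathbb Z}(-1)^{mL}e^{2\pi i v(e'+mL)}e^{2\pi i u(n'+mN)}e^{2\pi i\tau\left(n'e'+\frac{e'^2}{2}+\frac{m^2}{2}(2NL+L^2)+m(Ne'+n'L+Le')\right)},$$ with $\lfloor e'\rfloor$ the largest integer $\le\operatorname{Re}e'$. Then for all $n'\in\mathbb R$ and $t\in\mathbb Z$, $$\chi_{\mathsf A^{n,\ell}_{n',t}}(u,v;\tau)=\frac1\ell\sum_{s\in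 I}\xi_\ell^{-ts}\chi_{\mathsf A^{a,1}_{n',0}}\Big(u,v+\frac s\ell;\tau\Big),\qquad \chi_{\mathsf A^{a,1}_{n',0}}\Big(u,v+\frac t\ell;\tau\Big)=\sum_{s\in I}\xi_\ell^{ts}\chi_{\mathsf A^{n,\ell}_{n',s}}(u,v;\tau),$$ and for all $n',e'\in\mathbb C$ and $s,t\in\mathbb Z$, $$\chi_{\mathsf T^{n,\ell}_{n'+tn/\ell,\,e'+t}}(u,v;\tau)=\frac1\ell\sum_{s\in I}\xi_\ell^{-st}e^{-2\pi i e's/\ell}\chi_{\mathsf T^{a,1}_{n',e'}}\Big(u,v+\frac s\ell;\tau\Big),$$ $$\chi_{\mathsf T^{a,1}_{n',e'}}\Big(u,v+\frac s\ell;\tau\Big)=e^{2\pi i e's/\ell}\sum_{t\in I}\xi_\ell^{st}\chi_{\mathsf T^{n,\ell}_{n'+tn/\ell,\,e'+t}}(u,v;\tau),$$ for all $u,v\in\mathbb C$, $\tau\in\mathbb H$ for which the atypical series are defined.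
   Context: $\theta_1(u;\tau)=-i\sum_{n\in\mathbb Z}(-1)^n e^{\pi i(n+\frac12)^2\tau+2\pi i u(n+\frac12)}$ and $\eta(\tau)=e^{\pi i\tau/12}\prod_{j\ge1}(1-e^{2\pi i j\tau})$. The functions $\chi_{\mathsf A}$, $\chi_{\mathsf T}$ are characters of atypical, respectively typical, modules of W-superalgebras extending $\widehat{\mathfrak{gl}}(1|1)$; $\mathsf A^{a,1}$, $\mathsf T^{a,1}$ are the case $(N,L)=(a,1)$. *)

theory Defs
  imports "HOL-Analysis.Analysis"
begin

definition theta1 :: "complex \<Rightarrow> complex \<Rightarrow> complex" where
  "theta1 u \<tau> = - \<i> * (\<Sum>\<^sub>\<infinity>n::int. (-1) powi n *
      exp (pi * \<i> * (of_int n + 1/2)^2 * \<tau> + 2 * pi * \<i> * u * (of_int n + 1/2)))"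

definition eta :: "complex \<Rightarrow> complex" where
  "eta \<tau> = exp (pi * \<i> * \<tau> / 12) * (\<Prod>i. (1 - exp (2 * pi * \<i> * of_nat (Suc i) * \<tau>)))"

text \<open>Summand (index k = m L + l') of the character of the atypical module A^{N,L}; A = N/L assumed integral.\<close>
definition chiA_term :: "int \<Rightarrow> int \<Rightarrow> real \<Rightarrow> int \<Rightarrow> complex \<Rightarrow> complex \<Rightarrow> complex \<Rightarrow> complex" where
  "chiA_term N L n' k u v \<tau> =
     (let A = (of_int (N div L) :: complex); kc = (of_int k :: complex) in
          (-1) powi k * exp (2 * pi * \<i> * v * kc)
          * exp (2 * pi * \<i> * u * (A * kc + of_real n' + 1/2))
          * exp (pi * \<i> * \<tau> * kc * (kc * (2 * A + 1) + 2 * of_real n' + 1))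
          / (1 - exp (2 * pi * \<i> * (u + kc * \<tau>))))"

definition chiA :: "int \<Rightarrow> int \<Rightarrow> real \<Rightarrow> int \<Rightarrow> complex \<Rightarrow> complex \<Rightarrow> complex \<Rightarrow> complex" where
  "chiA N L n' l' u v \<tau> =
      - \<i> * theta1 u \<tau> / (eta \<tau>)^3 *
      (\<Sum>\<^sub>\<infinity>m::int. chiA_term N L n' (m * L + l') u v \<tau>)"

definition chiT :: "int \<Rightarrow> int \<Rightarrow> complex \<Rightarrow> complex \<Rightarrow> complex \<Rightarrow> complex \<Rightarrow> complex \<Rightarrow> complex" where
  "chiT N L n' e' u v \<tau> =
     \<i> * (-1) powi \<lfloor>Re e'\<rfloor> * theta1 u \<tau> / (eta \<tau>)^3 *
     (\<Sum>\<^sub>\<infinity>m::int. (-1) powi (m * L)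
        * exp (2 * pi * \<i> * v * (e' + of_int (m * L)))
        * exp (2 * pi * \<i> * u * (n' + of_int (m * N)))
        * exp (2 * pi * \<i> * \<tau> * (n' * e' + e'^2 / 2
              + (of_int m)^2 / 2 * of_int (2 * N * L + L^2)
              + of_int m * (of_int N * e' + n' * of_int L + of_int L * e'))))"

definition xi :: "int \<Rightarrow> complex" where
  "xi l = exp (2 * pi * \<i> / of_int l)"

end

theory Submission
  imports Defs
begin


lemma xi_powi: "l \<noteq> 0 \<Longrightarrow> xi l powi m = exp (2 * pi * \<i> * of_int m / of_int l)"
  unfolding xi_def exp_power_int by (simp add: field_simps)

lemma xi_nz: "xi l \<noteq> 0" by (simp add: xi_def)

lemma xi_powi_l: "l \<noteq> 0 \<Longrightarrow> xi l powi l = 1"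
  by (simp add: xi_powi)

lemma xi_powi_dvd: assumes "l \<noteq> 0" "l dvd m" shows "xi l powi m = 1"
proof -
  obtain q where "m = l * q" using assms by blast
  then show ?thesis using assms by (simp add: power_int_mult xi_powi_l)
qed

lemma xi_powi_ndvd: assumes "l > 0" "\<not> l dvd m" shows "xi l powi m \<noteq> 1"
proof
  assume "xi l powi m = 1"
  then have "exp (2 * pi * \<i> * of_int m / of_int l) = 1" using assms xi_powi by force
  then obtain q :: int where q: "Im (2 * pi * \<i> * of_int m / of_int l) = of_int (2 * q) * pi"
    unfolding exp_eq_1 by blast
  have "2 * pi * of_int m / of_int l = of_int (2 * q) * pi"
    using q assms by (simp add: Im_divide power2_eq_square)
  then have "real_of_int m = of_int q * of_int l" using assms by (simp add: field_simps)
  then have "m = q * l" by (metis of_int_eq_iff of_int_mult)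
  then show False using assms by simp
qed

lemma geom_int:
  fixes w :: complex assumes "w \<noteq> 0"
  shows "(w - 1) * (\<Sum>s\<in>{n..n + int p - 1}. w powi s) = w powi (n + int p) - w powi n"
proof (induction p)
  case 0 then show ?case by simp
next
  case (Suc p)
  have e: "{n..n + int (Suc p) - 1} = insert (n + int p) {n..n + int p - 1}" by auto
  have "(w - 1) * (\<Sum>s\<in>{n..n + int (Suc p) - 1}. w powi s)
     = (w - 1) * w powi (n + int p) + (w - 1) * (\<Sum>s\<in>{n..n + int p - 1}. w powi s)"
    unfolding e by (simp add: distrib_left)
  also have "\<dots> = (w - 1) * w powi (n + int p) + (w powi (n + int p) - w powi n)" using Suc by simp
  also have "\<dots> = w powi (n + int (Suc p)) - w powi n"
    using assms by (simp add: power_int_add algebra_simps)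
  finally show ?case .
qed

lemma orth:
  assumes "l > 0"
  shows "(\<Sum>s\<in>{n..n+l-1}. xi l powi (j * s)) = (if l dvd j then of_int l else 0)"
proof (cases "l dvd j")
  case True
  then have "\<And>s. xi l powi (j * s) = 1" using assms by (simp add: xi_powi_dvd)
  then show ?thesis using True assms by simp
next
  case False
  define w where "w = xi l powi j"
  have w0: "w \<noteq> 0" unfolding w_def by (simp add: xi_nz)
  have w1: "w \<noteq> 1" unfolding w_def using False assms xi_powi_ndvd by blast
  have wl: "w powi l = 1" unfolding w_def using assms
    by (metis power_int_mult mult.commute xi_powi_l less_irrefl power_int_1_left)
  have "(w - 1) * (\<Sum>s\<in>{n..n + int (nat l) - 1}. w powi s) = w powi (n + int (nat l)) - w powi n"
    by (rule geom_int[OF w0])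
  also have "\<dots> = 0" using assms wl w0 by (simp add: power_int_add)
  finally have "(\<Sum>s\<in>{n..n+l-1}. w powi s) = 0" using w1 assms by simp
  then show ?thesis using False unfolding w_def by (simp add: power_int_mult)
qed



lemma infsum_fsum:
  fixes f :: "'i \<Rightarrow> 'a \<Rightarrow> complex"
  assumes "finite S" "\<And>s. s \<in> S \<Longrightarrow> f s summable_on A"
  shows "(\<lambda>x. \<Sum>s\<in>S. f s x) summable_on A \<and> (\<Sum>\<^sub>\<infinity>x\<in>A. \<Sum>s\<in>S. f s x) = (\<Sum>s\<in>S. \<Sum>\<^sub>\<infinity>x\<in>A. f s x)"
  using assms
proof (induction S rule: finite_induct)
  case empty then show ?case by simp
next
  case (insert s S)
  then have IH: "(\<lambda>x. \<Sum>s\<in>S. f s x) summable_on A"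
     "(\<Sum>\<^sub>\<infinity>x\<in>A. \<Sum>s\<in>S. f s x) = (\<Sum>s\<in>S. \<Sum>\<^sub>\<infinity>x\<in>A. f s x)" by auto
  have fs: "f s summable_on A" using insert by auto
  show ?case using insert(1,2) IH fs
    by (simp add: summable_on_add infsum_add)
qed

lemma summ_cmp:
  fixes f g :: "'a \<Rightarrow> complex"
  assumes "f summable_on A" "\<And>k. norm (g k) \<le> C * norm (f k)"
  shows "g summable_on A"
proof -
  have "(\<lambda>k. of_real C * f k) summable_on A" using assms(1) by (rule summable_on_cmult_right)
  then have "(\<lambda>k. norm (of_real C * f k)) summable_on A" using summable_on_iff_abs_summable_on_complex[of "\<lambda>k. of_real C * f k" A] by simp
  then have "(\<lambda>k. norm (g k)) summable_on A"
  proof (rule Infinite_Sum.abs_summable_on_comparison_test)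
    fix x show "norm (g x) \<le> norm (complex_of_real C * f x)"
      using assms(2)[of x] by (simp add: norm_mult) (smt (verit) mult_right_mono norm_ge_zero)
  qed
  then show ?thesis using summable_on_iff_abs_summable_on_complex[of g A] by simp
qed

lemma infsum_class:
  fixes g :: "int \<Rightarrow> complex" assumes l: "l > 0"
  shows "(\<Sum>\<^sub>\<infinity>m. g (m*l+t)) = (\<Sum>\<^sub>\<infinity>k. if k mod l = t mod l then g k else 0)"
proof -
  have inj: "inj_on (\<lambda>m. m*l+t) UNIV" using l by (auto simp: inj_on_def)
  have img: "range (\<lambda>m. m*l+t) = {k. k mod l = t mod l}"
  proof (auto)
    fix k assume "k mod l = t mod l"
    then have "l dvd (k - t)" by (simp add: mod_eq_dvd_iff)
    then obtain q where "k - t = l * q" by blast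
    then have "k = q * l + t" by (simp add: algebra_simps)
    then show "k \<in> range (\<lambda>m. m*l+t)" by blast
  qed
  have "(\<Sum>\<^sub>\<infinity>m. g (m*l+t)) = infsum g (range (\<lambda>m. m*l+t))"
    using infsum_reindex[OF inj, of g] by (simp add: comp_def)
  also have "\<dots> = (\<Sum>\<^sub>\<infinity>k. if k mod l = t mod l then g k else 0)"
    unfolding img by (rule infsum_cong_neutral) auto
  finally show ?thesis .
qed

lemma uniq_sum:
  fixes g :: "int \<Rightarrow> complex" assumes l: "l > 0"
  shows "(\<Sum>t\<in>{n..n+l-1}. if k mod l = t mod l then g t else 0) = g (n + (k - n) mod l)"
proof -
  let ?t0 = "n + (k - n) mod l"
  have mem: "?t0 \<in> {n..n+l-1}" using l pos_mod_bound[of l "k-n"] pos_mod_sign[of l "k-n"] by simp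
  have eq: "t = ?t0" if "t \<in> {n..n+l-1}" "k mod l = t mod l" for t
  proof -
    have "(t - n) mod l = (k - n) mod l" using that(2) by (metis mod_diff_left_eq)
    moreover have "(t - n) mod l = t - n" using that(1) l by (intro mod_pos_pos_trivial) auto
    ultimately show ?thesis by simp
  qed
  have k0: "k mod l = ?t0 mod l" by (simp add: mod_add_right_eq)
  have "(\<Sum>t\<in>{n..n+l-1}. if k mod l = t mod l then g t else 0) = (\<Sum>t\<in>{n..n+l-1}. if t = ?t0 then g t else 0)"
  proof (rule sum.cong[OF refl])
    fix t assume "t \<in> {n..n+l-1}"
    then show "(if k mod l = t mod l then g t else 0) = (if t = ?t0 then g t else 0)"
      using eq[of t] k0 by auto
  qed
  also have "\<dots> = g ?t0" using mem by simp
  finally show ?thesis .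
qed



lemma shift_xi:
  assumes "l > 0"
  shows "exp (2 * pi * \<i> * (of_int s / of_int l) * of_int k) = xi l powi (k * s)"
  using assms by (simp add: xi_powi field_simps)

lemma generic:
  fixes F :: "complex \<Rightarrow> int \<Rightarrow> complex" and e :: complex and l n :: int
  assumes l: "l > 0" and summ: "\<And>v. F v summable_on UNIV"
   and shift: "\<And>v w k. F (v + w) k = exp (2 * pi * \<i> * w * e) * exp (2 * pi * \<i> * w * of_int k) * F v k"
  shows "(\<Sum>\<^sub>\<infinity>m. F v (m * l+t)) = 1 / of_int l * (\<Sum>s\<in>{n..n+l-1}. xi l powi (- s * t)
            * exp (- 2 * pi * \<i> * e * of_int s/of_int l) * (\<Sum>\<^sub>\<infinity>m. F (v + of_int s/of_int l) m))"
    and "(\<Sum>\<^sub>\<infinity>m. F (v + of_int s/of_int l) m) = exp (2 * pi * \<i> * e * of_int s/of_int l)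
            * (\<Sum>t\<in>{n..n+l-1}. xi l powi (s * t) * (\<Sum>\<^sub>\<infinity>m. F v (m * l+t)))"
proof -
  define I where "I = {n..n+l-1}"
  define E where "E s = exp (2 * pi * \<i> * e * of_int s/of_int l)" for s :: int
  have E_inv: "exp (- 2 * pi * \<i> * e * of_int s/of_int l) * E s = 1" for s
    unfolding E_def by (simp add: exp_add[symmetric])
  have norm_xi: "norm (xi l powi j) = 1" for j
    using l by (simp add: xi_powi norm_exp_eq_Re)
  have tw: "(\<lambda>k. c k * F v k) summable_on UNIV" if "\<And>k. norm (c k) \<le> C" for c C
    by (rule summ_cmp[OF summ[of v], where C=C]) (simp add: norm_mult mult_right_mono that)
  have sh: "F (v + of_int s/of_int l) k = E s * (xi l powi (k * s) * F v k)" for s k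
    unfolding shift E_def using shift_xi[OF l, of s k] by (simp add: mult_ac)
  have shsum: "(\<Sum>\<^sub>\<infinity>m. F (v + of_int s/of_int l) m) = E s * (\<Sum>\<^sub>\<infinity>k. xi l powi (k * s) * F v k)" for s
    unfolding sh by (rule infsum_cmult_right) (rule tw[where C=1], simp add: norm_xi)
  have cls: "(\<Sum>\<^sub>\<infinity>m. F v (m * l+t)) = (\<Sum>\<^sub>\<infinity>k. if k mod l = t mod l then F v k else 0)" for t
    by (rule infsum_class[OF l])
  have "(\<Sum>s\<in>I. xi l powi (- s * t) * exp (- 2 * pi * \<i> * e * of_int s/of_int l) * (\<Sum>\<^sub>\<infinity>m. F (v + of_int s/of_int l) m))
      = (\<Sum>s\<in>I. \<Sum>\<^sub>\<infinity>k. xi l powi ((k - t) * s) * F v k)"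
  proof (rule sum.cong[OF refl])
    fix s
    have "xi l powi (- s * t) * exp (- 2 * pi * \<i> * e * of_int s/of_int l) * (\<Sum>\<^sub>\<infinity>m. F (v + of_int s/of_int l) m)
        = xi l powi (- s * t) * (\<Sum>\<^sub>\<infinity>k. xi l powi (k * s) * F v k)"
    proof -
      have "xi l powi (- s * t) * exp (- 2 * pi * \<i> * e * of_int s/of_int l) * (E s * X)
          = xi l powi (- s * t) * ((exp (- 2 * pi * \<i> * e * of_int s/of_int l) * E s) * X)" for X
        by (simp only: mult.assoc)
      then show ?thesis unfolding shsum E_inv by simp
    qed
    also have "\<dots> = (\<Sum>\<^sub>\<infinity>k. xi l powi (- s * t) * (xi l powi (k * s) * F v k))"
      by (rule infsum_cmult_right[symmetric]) (rule tw[where C=1], simp add: norm_xi)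
    also have "\<dots> = (\<Sum>\<^sub>\<infinity>k. xi l powi ((k - t) * s) * F v k)"
    proof (rule infsum_cong)
      fix k
      have ee: "(k - t) * s = (- s * t) + k * s" by (simp add: algebra_simps)
      have "xi l powi ((k - t) * s) = xi l powi (- s * t) * xi l powi (k * s)"
        unfolding ee using xi_nz[of l] by (rule power_int_add[OF disjI1])
      then show "xi l powi (- s * t) * (xi l powi (k * s) * F v k) = xi l powi ((k - t) * s) * F v k"
        by simp
    qed
    finally show "xi l powi (- s * t) * exp (- 2 * pi * \<i> * e * of_int s/of_int l) * (\<Sum>\<^sub>\<infinity>m. F (v + of_int s/of_int l) m)
      = (\<Sum>\<^sub>\<infinity>k. xi l powi ((k - t) * s) * F v k)" .
  qed
  also have "\<dots> = (\<Sum>\<^sub>\<infinity>k. \<Sum>s\<in>I. xi l powi ((k - t) * s) * F v k)"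
    by (rule infsum_fsum[THEN conjunct2, symmetric]) (simp add: I_def, rule tw[where C=1], simp add: norm_xi)
  also have "\<dots> = (\<Sum>\<^sub>\<infinity>k. of_int l * (if k mod l = t mod l then F v k else 0))"
  proof (rule infsum_cong)
    fix k
    have "(\<Sum>s\<in>I. xi l powi ((k - t) * s) * F v k) = (\<Sum>s\<in>I. xi l powi ((k - t) * s)) * F v k"
      by (simp add: sum_distrib_right)
    also have "\<dots> = (if l dvd (k - t) then of_int l else 0) * F v k"
      unfolding I_def using orth[OF l, where n=n and j="k - t"] by simp
    finally show "(\<Sum>s\<in>I. xi l powi ((k - t) * s) * F v k) = of_int l * (if k mod l = t mod l then F v k else 0)"
      by (simp add: mod_eq_dvd_iff)
  qed
  also have "\<dots> = of_int l * (\<Sum>\<^sub>\<infinity>m. F v (m * l+t))"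
    unfolding cls by (rule infsum_cmult_right) (rule summ_cmp[OF summ[of v], where C=1], simp)
  finally show "(\<Sum>\<^sub>\<infinity>m. F v (m * l+t)) = 1 / of_int l * (\<Sum>s\<in>{n..n+l-1}. xi l powi (- s * t)
            * exp (- 2 * pi * \<i> * e * of_int s/of_int l) * (\<Sum>\<^sub>\<infinity>m. F (v + of_int s/of_int l) m))"
    using l unfolding I_def by simp
  have "(\<Sum>t\<in>I. xi l powi (s * t) * (\<Sum>\<^sub>\<infinity>m. F v (m * l+t)))
      = (\<Sum>t\<in>I. \<Sum>\<^sub>\<infinity>k. if k mod l = t mod l then xi l powi (s * t) * F v k else 0)"
  proof (rule sum.cong[OF refl])
    fix t
    show "xi l powi (s * t) * (\<Sum>\<^sub>\<infinity>m. F v (m * l+t)) = (\<Sum>\<^sub>\<infinity>k. if k mod l = t mod l then xi l powi (s * t) * F v k else 0)"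
      unfolding cls
      by (subst infsum_cmult_right[symmetric]) (rule summ_cmp[OF summ[of v], where C=1], simp, rule infsum_cong, simp)
  qed
  also have "\<dots> = (\<Sum>\<^sub>\<infinity>k. \<Sum>t\<in>I. if k mod l = t mod l then xi l powi (s * t) * F v k else 0)"
    by (rule infsum_fsum[THEN conjunct2, symmetric])
       (simp add: I_def, rule summ_cmp[OF summ[of v], where C=1], simp add: norm_mult norm_xi)
  also have "\<dots> = (\<Sum>\<^sub>\<infinity>k. xi l powi (k * s) * F v k)"
  proof (rule infsum_cong)
    fix k
    have "(\<Sum>t\<in>I. if k mod l = t mod l then xi l powi (s * t) * F v k else 0)
        = xi l powi (s * (n + (k - n) mod l)) * F v k"
      unfolding I_def by (rule uniq_sum[OF l])
    also have "\<dots> = xi l powi (k * s) * F v k"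
    proof -
      have "l dvd (k - (n + (k - n) mod l))" by (simp add: mod_eq_dvd_iff[symmetric] mod_add_right_eq)
      then obtain q where q: "k = (n + (k - n) mod l) + l * q" by (metis add_diff_cancel_left' add_diff_eq dvd_def)
      have ee: "k * s = s * (n + (k - n) mod l) + (l * q) * s" by (subst q) (simp add: algebra_simps)
      have "xi l powi (k * s) = xi l powi (s * (n + (k - n) mod l)) * xi l powi ((l * q) * s)"
        unfolding ee using xi_nz[of l] by (rule power_int_add[OF disjI1])
      also have "xi l powi ((l * q) * s) = 1"
        unfolding power_int_mult using xi_powi_l[of l] l by simp
      finally show ?thesis by simp
    qed
    finally show "(\<Sum>t\<in>I. if k mod l = t mod l then xi l powi (s * t) * F v k else 0) = xi l powi (k * s) * F v k" .
  qed
  finally show "(\<Sum>\<^sub>\<infinity>m. F (v + of_int s/of_int l) m) = exp (2 * pi * \<i> * e * of_int s/of_int l)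
            * (\<Sum>t\<in>{n..n+l-1}. xi l powi (s * t) * (\<Sum>\<^sub>\<infinity>m. F v (m * l+t)))"
    unfolding shsum I_def E_def by simp
qed



lemma ev_real_ge: "eventually (\<lambda>n::nat. x \<le> real n) sequentially"
proof -
  obtain N :: nat where "x \<le> real N" using real_arch_simple by blast
  then show ?thesis by (intro eventually_sequentiallyI[of N]) auto
qed

lemma summable_gauss_nat:
  assumes a: "\<alpha> > 0"
  shows "summable (\<lambda>n::nat. exp (\<beta> * real n - \<alpha> * (real n)^2))"
proof (rule summable_comparison_test_ev)
  show "summable (\<lambda>n::nat. (exp (-1::real)) ^ n)" using summable_geometric[of "exp (-1) :: real"] by simp
  show "eventually (\<lambda>n. norm (exp (\<beta> * real n - \<alpha> * (real n)^2)) \<le> (exp (-1::real)) ^ n) sequentially"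
    using ev_real_ge[of "(\<beta> + 1) / \<alpha>"]
  proof (rule eventually_mono)
    fix n :: nat assume h: "(\<beta> + 1) / \<alpha> \<le> real n"
    then have "\<beta> + 1 \<le> \<alpha> * real n" using a by (simp add: field_simps)
    then have "(\<beta> + 1) * real n \<le> \<alpha> * real n * real n" by (intro mult_right_mono) auto
    then have "\<beta> * real n - \<alpha> * (real n)^2 \<le> - real n" by (simp add: power2_eq_square algebra_simps)
    then show "norm (exp (\<beta> * real n - \<alpha> * (real n)^2)) \<le> (exp (-1::real)) ^ n"
      by (simp add: exp_of_nat_mult[symmetric])
  qed
qed

lemma summable_int_from_nat:
  fixes f :: "int \<Rightarrow> complex"
  assumes "summable (\<lambda>n. norm (f (int n)))" "summable (\<lambda>n. norm (f (- int n)))"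
  shows "f summable_on UNIV"
proof -
  have 1: "(\<lambda>n. f (int n)) summable_on UNIV" using assms(1) by (rule norm_summable_imp_summable_on)
  have 2: "(\<lambda>n. f (- int n)) summable_on UNIV" using assms(2) by (rule norm_summable_imp_summable_on)
  have i1: "inj_on int UNIV" by (simp add: inj_on_def)
  have i2: "inj_on (\<lambda>n::nat. - int n) UNIV" by (simp add: inj_on_def)
  have s1: "f summable_on range int" using 1 summable_on_reindex[OF i1, of f] by (simp add: comp_def)
  have s2: "f summable_on range (\<lambda>n::nat. - int n)" using 2 summable_on_reindex[OF i2, of f] by (simp add: comp_def)
  have u: "range int \<union> range (\<lambda>n::nat. - int n) = UNIV"
  proof (rule set_eqI)
    fix x :: int
    show "x \<in> range int \<union> range (\<lambda>n::nat. - int n) \<longleftrightarrow> x \<in> UNIV"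
    proof (cases "x \<ge> 0")
      case True
      then have "x = int (nat x)" by simp
      then show ?thesis by (metis UNIV_I UnI1 rangeI)
    next
      case False
      then have "x = - int (nat (- x))" by simp
      then show ?thesis by (metis UNIV_I UnI2 rangeI)
    qed
  qed
  show ?thesis using summable_on_union[OF s1 s2] unfolding u .
qed

lemma gauss_summ:
  fixes f :: "int \<Rightarrow> complex"
  assumes a: "\<alpha> > 0"
    and e1: "eventually (\<lambda>n. norm (f (int n)) \<le> B * exp (bbA * real n - \<alpha> * (real n)^2)) sequentially"
    and e2: "eventually (\<lambda>n. norm (f (- int n)) \<le> B * exp (bbB * real n - \<alpha> * (real n)^2)) sequentially"
  shows "f summable_on UNIV"
proof (rule summable_int_from_nat)
  show "summable (\<lambda>n. norm (f (int n)))"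
    by (rule summable_comparison_test_ev[OF _ summable_mult[OF summable_gauss_nat[OF a]]]) (use e1 in simp)
  show "summable (\<lambda>n. norm (f (- int n)))"
    by (rule summable_comparison_test_ev[OF _ summable_mult[OF summable_gauss_nat[OF a]]]) (use e2 in simp)
qed

lemma norm_exp_quad:
  "norm (exp (c0 + c1 * of_int j + c2 * (of_int j)^2)) = exp (Re c0) * exp (Re c1 * of_int j + Re c2 * (of_int j)^2)"
  by (simp add: norm_exp_eq_Re exp_add[symmetric] power2_eq_square)



lemma quad_summ:
  fixes f :: "int \<Rightarrow> complex"
  assumes qc: "Re qc < 0"
   and e1: "eventually (\<lambda>n. norm (f (int n)) \<le> B * norm (exp (qa + qb * of_int (int n) + qc * (of_int (int n))^2))) sequentially"
   and e2: "eventually (\<lambda>n. norm (f (- int n)) \<le> B * norm (exp (qa + qb * of_int (- int n) + qc * (of_int (- int n))^2))) sequentially"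
  shows "f summable_on UNIV"
proof (rule gauss_summ[where \<alpha> = "- Re qc" and B = "B * exp (Re qa)" and bbA = "Re qb" and bbB = "- Re qb"])
  show "- Re qc > 0" using qc by simp
  show "eventually (\<lambda>n. norm (f (int n)) \<le> B * exp (Re qa) * exp (Re qb * real n - - Re qc * (real n)^2)) sequentially"
    using e1 by (rule eventually_mono) (simp only: norm_exp_quad, simp add: mult_ac)
  show "eventually (\<lambda>n. norm (f (- int n)) \<le> B * exp (Re qa) * exp (- Re qb * real n - - Re qc * (real n)^2)) sequentially"
    using e2 by (rule eventually_mono) (simp only: norm_exp_quad, simp add: mult_ac)
qed

definition GT :: "int \<Rightarrow> int \<Rightarrow> complex \<Rightarrow> complex \<Rightarrow> complex \<Rightarrow> complex \<Rightarrow> complex \<Rightarrow> int \<Rightarrow> complex" where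
  "GT N L n' e' u \<tau> v m = (-1) powi (m * L)
        * exp (2 * pi * \<i> * v * (e' + of_int (m * L)))
        * exp (2 * pi * \<i> * u * (n' + of_int (m * N)))
        * exp (2 * pi * \<i> * \<tau> * (n' * e' + e'^2 / 2
              + (of_int m)^2 / 2 * of_int (2 * N * L + L^2)
              + of_int m * (of_int N * e' + n' * of_int L + of_int L * e')))"

lemma chiT_GT: "chiT N L n' e' u v \<tau> = \<i> * (-1) powi \<lfloor>Re e'\<rfloor> * theta1 u \<tau> / (eta \<tau>)^3 * (\<Sum>\<^sub>\<infinity>m. GT N L n' e' u \<tau> v m)"
  unfolding chiT_def GT_def ..

lemma GT_rel:
  assumes l: "l > 0" and n: "n = a * l"
  shows "(-1) powi \<lfloor>Re (e' + of_int t)\<rfloor> * GT n l (n' + of_int t * of_int n / of_int l) (e' + of_int t) u \<tau> v m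
       = (-1) powi \<lfloor>Re e'\<rfloor> * GT a 1 n' e' u \<tau> v (m * l + t)"
proof -
  have h: "of_int t * of_int n / of_int l = (of_int t * of_int a :: complex)" using l n by simp
  have fl: "\<lfloor>Re (e' + of_int t)\<rfloor> = \<lfloor>Re e'\<rfloor> + t" by simp
  have s: "(-1 :: complex) powi (\<lfloor>Re e'\<rfloor> + t) * (-1) powi (m * l) = (-1) powi \<lfloor>Re e'\<rfloor> * (-1) powi ((m * l + t) * 1)"
    by (simp add: power_int_add mult_ac)
  have a1: "exp (2 * pi * \<i> * v * (e' + of_int t + of_int (m * l))) = exp (2 * pi * \<i> * v * (e' + of_int ((m * l + t) * 1)))"
    by (simp add: algebra_simps)
  have a2: "exp (2 * pi * \<i> * u * (n' + of_int t * of_int a + of_int (m * n))) = exp (2 * pi * \<i> * u * (n' + of_int ((m * l + t) * a)))"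
    unfolding n by (simp add: algebra_simps)
  have a3: "exp (2 * pi * \<i> * \<tau> * ((n' + of_int t * of_int a) * (e' + of_int t) + (e' + of_int t)^2 / 2
              + (of_int m)^2 / 2 * of_int (2 * n * l + l^2)
              + of_int m * (of_int n * (e' + of_int t) + (n' + of_int t * of_int a) * of_int l + of_int l * (e' + of_int t))))
     = exp (2 * pi * \<i> * \<tau> * (n' * e' + e'^2 / 2
              + (of_int (m * l + t))^2 / 2 * of_int (2 * a * 1 + 1^2)
              + of_int (m * l + t) * (of_int a * e' + n' * of_int 1 + of_int 1 * e')))"
    unfolding n by (rule arg_cong[where f=exp]) (simp add: algebra_simps power2_eq_square divide_simps)
  show ?thesis
    unfolding GT_def h fl a1[symmetric] a2[symmetric] a3[symmetric] using s
    by (simp add: mult_ac)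
qed



lemma GT_shift: "GT a 1 n' e' u \<tau> (v + w) k = exp (2 * pi * \<i> * w * e') * exp (2 * pi * \<i> * w * of_int k) * GT a 1 n' e' u \<tau> v k"
proof -
  have "exp (2 * pi * \<i> * (v + w) * (e' + of_int (k * 1))) = exp (2 * pi * \<i> * v * (e' + of_int (k * 1))) * (exp (2 * pi * \<i> * w * e') * exp (2 * pi * \<i> * w * of_int k))"
    by (simp only: exp_add[symmetric]) (rule arg_cong[where f=exp], simp add: algebra_simps)
  then show ?thesis unfolding GT_def by (simp add: mult_ac)
qed

lemma GT_summ:
  assumes a: "a \<ge> 0" and t: "Im \<tau> > 0"
  shows "GT a 1 n' e' u \<tau> v summable_on UNIV"
proof -
  define c0 where "c0 = 2 * pi * \<i> * v * e' + 2 * pi * \<i> * u * n' + 2 * pi * \<i> * \<tau> * (n' * e' + e'^2 / 2)"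
  define c1 where "c1 = 2 * pi * \<i> * v + 2 * pi * \<i> * u * of_int a + 2 * pi * \<i> * \<tau> * (of_int a * e' + n' + e')"
  define c2 where "c2 = pi * \<i> * \<tau> * (2 * of_int a + 1)"
  have eq: "GT a 1 n' e' u \<tau> v j = (-1) powi j * exp (c0 + c1 * of_int j + c2 * (of_int j)^2)" for j
  proof -
    have "exp (2 * pi * \<i> * v * (e' + of_int (j * 1))) * exp (2 * pi * \<i> * u * (n' + of_int (j * a)))
        * exp (2 * pi * \<i> * \<tau> * (n' * e' + e'^2 / 2 + (of_int j)^2 / 2 * of_int (2 * a * 1 + 1^2)
              + of_int j * (of_int a * e' + n' * of_int 1 + of_int 1 * e')))
        = exp (c0 + c1 * of_int j + c2 * (of_int j)^2)"
      unfolding c0_def c1_def c2_def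
      by (simp only: exp_add[symmetric]) (rule arg_cong[where f=exp], simp add: algebra_simps power2_eq_square)
    then show ?thesis unfolding GT_def by (simp add: mult_ac)
  qed
  have c2n: "Re c2 < 0"
  proof -
    have "0 < pi * Im \<tau> * (2 * real_of_int a + 1)" using a t by (intro mult_pos_pos) auto
    then show ?thesis unfolding c2_def by (simp add: algebra_simps)
  qed
  show ?thesis
  proof (rule quad_summ[where qc=c2 and qa=c0 and qb=c1 and B=1, OF c2n])
    show "eventually (\<lambda>n. norm (GT a 1 n' e' u \<tau> v (int n)) \<le> 1 * norm (exp (c0 + c1 * of_int (int n) + c2 * (of_int (int n))^2))) sequentially"
      by (intro always_eventually allI) (simp only: eq norm_mult norm_power_int, simp)
    show "eventually (\<lambda>n. norm (GT a 1 n' e' u \<tau> v (- int n)) \<le> 1 * norm (exp (c0 + c1 * of_int (- int n) + c2 * (of_int (- int n))^2))) sequentially"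
      by (intro always_eventually allI) (simp only: eq norm_mult norm_power_int, simp)
  qed
qed



lemma chiA_shift: "chiA_term a 1 n' k u (v + w) \<tau> = exp (2 * pi * \<i> * w * 0) * exp (2 * pi * \<i> * w * of_int k) * chiA_term a 1 n' k u v \<tau>"
proof -
  have "exp (2 * pi * \<i> * (v + w) * of_int k) = exp (2 * pi * \<i> * v * of_int k) * exp (2 * pi * \<i> * w * of_int k)"
    by (simp only: exp_add[symmetric]) (rule arg_cong[where f=exp], simp add: algebra_simps)
  then show ?thesis unfolding chiA_term_def Let_def by (simp add: mult_ac)
qed

lemma chiA_summ:
  assumes a: "a \<ge> 0" and t: "Im \<tau> > 0"
  shows "(\<lambda>k. chiA_term a 1 n' k u v \<tau>) summable_on UNIV"
proof -
  define c0 where "c0 = 2 * pi * \<i> * u * (of_real n' + 1/2)"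
  define c1 where "c1 = 2 * pi * \<i> * v + 2 * pi * \<i> * u * of_int a + pi * \<i> * \<tau> * (2 * of_real n' + 1)"
  define c2 where "c2 = pi * \<i> * \<tau> * (2 * of_int a + 1)"
  define D where "D k = 1 - exp (2 * pi * \<i> * (u + of_int k * \<tau>))" for k :: int
  have eq: "chiA_term a 1 n' k u v \<tau> = (-1) powi k * exp (c0 + c1 * of_int k + c2 * (of_int k)^2) / D k" for k
  proof -
    have "exp (2 * pi * \<i> * v * of_int k) * exp (2 * pi * \<i> * u * (of_int a * of_int k + of_real n' + 1/2))
        * exp (pi * \<i> * \<tau> * of_int k * (of_int k * (2 * of_int a + 1) + 2 * of_real n' + 1))
        = exp (c0 + c1 * of_int k + c2 * (of_int k)^2)"
      unfolding c0_def c1_def c2_def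
      by (simp only: exp_add[symmetric]) (rule arg_cong[where f=exp], simp add: algebra_simps power2_eq_square)
    then show ?thesis unfolding chiA_term_def Let_def D_def by (simp add: mult_ac)
  qed
  have nrm: "norm (chiA_term a 1 n' k u v \<tau>) = norm (exp (c0 + c1 * of_int k + c2 * (of_int k)^2)) / norm (D k)" for k
    unfolding eq by (simp add: norm_mult norm_divide norm_power_int)
  have nD: "norm (exp (2 * pi * \<i> * (u + of_int k * \<tau>))) = exp (- 2 * pi * (Im u + of_int k * Im \<tau>))" for k
    by (simp add: norm_exp_eq_Re algebra_simps)
  have e1: "exp (-1::real) \<le> 1/2"
  proof -
    have "2 \<le> exp (1::real)" using exp_ge_add_one_self[of 1] by simp
    then show ?thesis by (simp add: exp_minus field_simps)
  qed
  have c2n: "Re c2 < 0"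
  proof -
    have "0 < pi * Im \<tau> * (2 * real_of_int a + 1)" using a t by (intro mult_pos_pos) auto
    then show ?thesis unfolding c2_def by (simp add: algebra_simps)
  qed
  show ?thesis
  proof (rule quad_summ[where qc=c2 and qa=c0 and qb=c1 and B=2, OF c2n])
    show "eventually (\<lambda>n. norm (chiA_term a 1 n' (int n) u v \<tau>) \<le> 2 * norm (exp (c0 + c1 * of_int (int n) + c2 * (of_int (int n))^2))) sequentially"
      using ev_real_ge[of "(1 - Im u) / Im \<tau>"]
    proof (rule eventually_mono)
      fix n :: nat assume "(1 - Im u) / Im \<tau> \<le> real n"
      then have "1 \<le> Im u + real n * Im \<tau>" using t by (simp add: pos_divide_le_eq)
      then have "2 * pi * 1 \<le> 2 * pi * (Im u + real n * Im \<tau>)" by (intro mult_left_mono) auto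
      then have "- 2 * pi * (Im u + real n * Im \<tau>) \<le> -1" using pi_gt3 by linarith
      then have "norm (exp (2 * pi * \<i> * (u + of_int (int n) * \<tau>))) \<le> 1/2"
        unfolding nD using e1 by (smt (verit) exp_le_cancel_iff of_int_of_nat_eq)
      then have "1/2 \<le> norm (D (int n))" unfolding D_def
        using norm_triangle_ineq2[of 1 "exp (2 * pi * \<i> * (u + of_int (int n) * \<tau>))"] by simp
      then show "norm (chiA_term a 1 n' (int n) u v \<tau>) \<le> 2 * norm (exp (c0 + c1 * of_int (int n) + c2 * (of_int (int n))^2))"
        unfolding nrm by (simp add: divide_simps)
    qed
    show "eventually (\<lambda>n. norm (chiA_term a 1 n' (- int n) u v \<tau>) \<le> 2 * norm (exp (c0 + c1 * of_int (- int n) + c2 * (of_int (- int n))^2))) sequentially"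
      using ev_real_ge[of "(1 + Im u) / Im \<tau>"]
    proof (rule eventually_mono)
      fix n :: nat assume "(1 + Im u) / Im \<tau> \<le> real n"
      then have "1 \<le> real n * Im \<tau> - Im u" using t by (simp add: pos_divide_le_eq)
      then have "2 * pi * 1 \<le> 2 * pi * (real n * Im \<tau> - Im u)" by (intro mult_left_mono) auto
      then have "1 \<le> - 2 * pi * (Im u + of_int (- int n) * Im \<tau>)" using pi_gt3 by (simp add: algebra_simps)
      then have "2 \<le> norm (exp (2 * pi * \<i> * (u + of_int (- int n) * \<tau>)))"
        unfolding nD using exp_ge_add_one_self[of "- 2 * pi * (Im u + of_int (- int n) * Im \<tau>)"] by linarith
      then have "1 \<le> norm (D (- int n))" unfolding D_def
        using norm_triangle_ineq2[of "exp (2 * pi * \<i> * (u + of_int (- int n) * \<tau>))" 1]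
        by (simp add: norm_minus_commute)
      then show "norm (chiA_term a 1 n' (- int n) u v \<tau>) \<le> 2 * norm (exp (c0 + c1 * of_int (- int n) + c2 * (of_int (- int n))^2))"
        unfolding nrm by (simp add: divide_simps)
    qed
  qed
qed


theorem mainTheorem5:
  fixes l n :: int
  assumes "l > 0" and "l dvd n" and "n * l + l^2 > 0"
  defines "a \<equiv> n div l"
  defines "I \<equiv> {n .. n + l - 1}"
  shows
   "(\<forall>(n'::real) (t::int) u v \<tau>. Im \<tau> > 0 \<and>
        (\<forall>k::int. exp (2 * pi * \<i> * (u + of_int k * \<tau>)) \<noteq> 1) \<longrightarrow>
      chiA n l n' t u v \<tau>
        = 1 / of_int l * (\<Sum>s\<in>I. xi l powi (- t * s) * chiA a 1 n' 0 u (v + of_int s / of_int l) \<tau>)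
      \<and> chiA a 1 n' 0 u (v + of_int t / of_int l) \<tau>
        = (\<Sum>s\<in>I. xi l powi (t * s) * chiA n l n' s u v \<tau>))
    \<and>
    (\<forall>(n'::complex) (e'::complex) (s::int) (t::int) u v \<tau>. Im \<tau> > 0 \<longrightarrow>
      chiT n l (n' + of_int t * of_int n / of_int l) (e' + of_int t) u v \<tau>
        = 1 / of_int l * (\<Sum>s\<in>I. xi l powi (- s * t) * exp (- 2 * pi * \<i> * e' * of_int s / of_int l)
                            * chiT a 1 n' e' u (v + of_int s / of_int l) \<tau>)
      \<and> chiT a 1 n' e' u (v + of_int s / of_int l) \<tau>
        = exp (2 * pi * \<i> * e' * of_int s / of_int l) *
          (\<Sum>t\<in>I. xi l powi (s * t) * chiT n l (n' + of_int t * of_int n / of_int l) (e' + of_int t) u v \<tau>))"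
proof -
  have l: "l > 0" by fact
  have na: "n = a * l" using assms(2) unfolding a_def by simp
  have a0: "a \<ge> 0"
  proof -
    have "0 < l * (l * (a + 1))" using assms(3) unfolding na by (simp add: power2_eq_square algebra_simps)
    then have "0 < l * (a + 1)" using l by (simp add: zero_less_mult_iff)
    then have "0 < a + 1" using l by (simp add: zero_less_mult_iff)
    then show ?thesis by simp
  qed
  have nl: "n div l = a div 1" unfolding a_def by simp
  have termeq: "chiA_term n l = chiA_term a 1" unfolding chiA_term_def nl ..
  show ?thesis
  proof (intro conjI allI impI)
    fix n' :: real and t :: int and u v \<tau> :: complex
    assume h: "Im \<tau> > 0 \<and> (\<forall>k::int. exp (2 * pi * \<i> * (u + of_int k * \<tau>)) \<noteq> 1)"
    then have t: "Im \<tau> > 0" by simp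
    define F where "F v k = chiA_term a 1 n' k u v \<tau>" for v k
    define P where "P = - \<i> * theta1 u \<tau> / (eta \<tau>)^3"
    have summ: "\<And>v. F v summable_on UNIV" unfolding F_def using chiA_summ[OF a0 t] by blast
    have shift: "\<And>v w k. F (v + w) k = exp (2 * pi * \<i> * w * 0) * exp (2 * pi * \<i> * w * of_int k) * F v k"
      unfolding F_def by (rule chiA_shift)
    note G = generic[OF l summ shift, where n=n]
    have c1: "chiA n l n' t' u v' \<tau> = P * (\<Sum>\<^sub>\<infinity>m. F v' (m * l + t'))" for t' v'
      unfolding chiA_def P_def F_def termeq ..
    have c2: "chiA a 1 n' 0 u v' \<tau> = P * (\<Sum>\<^sub>\<infinity>m. F v' m)" for v'
      unfolding chiA_def P_def F_def by simp
    show "chiA n l n' t u v \<tau>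
        = 1 / of_int l * (\<Sum>s\<in>I. xi l powi (- t * s) * chiA a 1 n' 0 u (v + of_int s / of_int l) \<tau>)"
      unfolding c1 c2 G(1)[of v t] I_def
      by (simp add: sum_distrib_left mult_ac)
    show "chiA a 1 n' 0 u (v + of_int t / of_int l) \<tau> = (\<Sum>s\<in>I. xi l powi (t * s) * chiA n l n' s u v \<tau>)"
      unfolding c1 c2 G(2)[of v t] I_def
      by (simp add: sum_distrib_left mult_ac)
  next
    fix n' e' :: complex and s t :: int and u v \<tau> :: complex
    assume t: "Im \<tau> > 0"
    define F where "F v k = GT a 1 n' e' u \<tau> v k" for v k
    define P where "P = \<i> * (-1) powi \<lfloor>Re e'\<rfloor> * theta1 u \<tau> / (eta \<tau>)^3"
    have summ: "\<And>v. F v summable_on UNIV" unfolding F_def using GT_summ[OF a0 t] by blast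
    have shift: "\<And>v w k. F (v + w) k = exp (2 * pi * \<i> * w * e') * exp (2 * pi * \<i> * w * of_int k) * F v k"
      unfolding F_def by (rule GT_shift)
    note G = generic[OF l summ shift, where n=n]
    have c1: "chiT n l (n' + of_int t' * of_int n / of_int l) (e' + of_int t') u v' \<tau> = P * (\<Sum>\<^sub>\<infinity>m. F v' (m * l + t'))" for t' v'
    proof -
      have "chiT n l (n' + of_int t' * of_int n / of_int l) (e' + of_int t') u v' \<tau>
          = \<i> * theta1 u \<tau> / (eta \<tau>)^3 * (\<Sum>\<^sub>\<infinity>m. (-1) powi \<lfloor>Re (e' + of_int t')\<rfloor> * GT n l (n' + of_int t' * of_int n / of_int l) (e' + of_int t') u \<tau> v' m)"
        unfolding chiT_GT infsum_cmult_right' by (simp add: mult_ac)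
      also have "\<dots> = \<i> * theta1 u \<tau> / (eta \<tau>)^3 * (\<Sum>\<^sub>\<infinity>m. (-1) powi \<lfloor>Re e'\<rfloor> * F v' (m * l + t'))"
        unfolding F_def GT_rel[OF l na] ..
      also have "\<dots> = P * (\<Sum>\<^sub>\<infinity>m. F v' (m * l + t'))"
        unfolding P_def infsum_cmult_right' by (simp add: mult_ac)
      finally show ?thesis .
    qed
    have c2: "chiT a 1 n' e' u v' \<tau> = P * (\<Sum>\<^sub>\<infinity>m. F v' m)" for v'
      unfolding chiT_GT P_def F_def ..
    show "chiT n l (n' + of_int t * of_int n / of_int l) (e' + of_int t) u v \<tau>
        = 1 / of_int l * (\<Sum>s\<in>I. xi l powi (- s * t) * exp (- 2 * pi * \<i> * e' * of_int s / of_int l)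
                            * chiT a 1 n' e' u (v + of_int s / of_int l) \<tau>)"
      unfolding c1 c2 G(1)[of v t] I_def
      by (simp add: sum_distrib_left mult_ac)
    show "chiT a 1 n' e' u (v + of_int s / of_int l) \<tau>
        = exp (2 * pi * \<i> * e' * of_int s / of_int l) *
          (\<Sum>t\<in>I. xi l powi (s * t) * chiT n l (n' + of_int t * of_int n / of_int l) (e' + of_int t) u v \<tau>)"
      unfolding c1 c2 G(2)[of v s] I_def
      by (simp add: sum_distrib_left mult_ac)
  qed
qed

end
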